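(* Let $(\mathfrak g,V,\Theta)$ be a Lie–Leibniz triple, with $\mathbb U$, $R_\Theta$, $\sigma$ and $K$ as in the context. Then $K=\{k\in\mathbb U_2:\ [\chi,k]=0\text{ for all }\chi\in R_\Theta\}$; in particular $[R_\Theta,K]=0$.
   Context: Ground field $\mathbb{K}=\mathbb{R}$ or $\mathbb{C}$; all spaces $\mathbb{Z}$-graded with parity equal to degree mod 2. A Lie–Leibniz triple $(\mathfrak g,V,\Theta)$ consists of a Lie algebra $\mathfrak g$, a $\mathfrak g$-module $V$ (action $x\cdot u$) and a linear map $\Theta:V\to\mathfrak g$ with $\Theta(\Theta(u)\cdot v)=[\Theta(u),\Theta(v)]$ for all $u,v\in V$. Construction of $\mathbb U$: $\mathbb U_0=\mathfrak g$, $\mathbb U_1=V[-1]$ ($V$ in degree 1, odd), $\mathbb U_{-p+1}=\mathrm{Hom}(\mathbb U_1,\mathbb U_{-p+2})$ for $p\ge2$; brackets on $\mathbb U_{1-}$: Lie bracket on $\mathfrak g$, and recursively $[x,u]=x(u)$, $[u,x]=-(-1)^{|x|}x(u)$, $[x,y](u)=[x,y(u)]+(-1)^{|y|}[x(u),y]$ for $x,y\in\mathbb U_{0-}$, $u\in\mathbb U_1$, where $x(u)=x\cdot u$ for $x\in\mathfrak g$. This is a semilocal Lie superalgebra and $\mathbb U$ is its unique extension to a Lie superalgebra with $\mathbb U_+$ the free Lie superalgebra on $\mathbb U_1$. $\Theta$ is regarded as an element of $\mathbb U_{-1}=\mathrm{Hom}(\mathbb U_1,\mathfrak g)$. $R_\Theta\subseteq\mathbb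 U_{-1}$ is the $\mathfrak g$-submodule generated by $\Theta$ under the action $x\cdot\phi=[x,\phi]$, i.e. $(x\cdot\phi)(u)=[x,\phi(u)]-\phi(x\cdot u)$; it is the span of $\Theta$ and all $x_1\cdot(x_2\cdot\cdots(x_n\cdot\Theta))$. $\mathbb U_2$ is spanned by the brackets $[u,v]$, $u,v\in\mathbb U_1$ (symmetric in $u,v$). Let $\sigma:\mathbb U_2\to\mathbb U_1$ be the linear map with $\sigma([u,v])=\tfrac12(\Theta(u)\cdot v+\Theta(v)\cdot u)$. $K$ is the sum of all $\mathfrak g$-submodules of $\mathbb U_2$ (for the adjoint action of $\mathfrak g\subseteq\mathbb U$) contained in $\ker\sigma$. *)

theory Defs
  imports Complex_Main "HOL-Library.Function_Algebras"
begin

text \<open>Scalars: a field 'f (instantiated with real and complex in the theorem).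
  g is a vector space via sg with Lie bracket br; V is a vector space via sv with
  g-action act; Theta : V -> g.\<close>

definition lie_leibniz_triple ::
  "('f::field \<Rightarrow> 'g::ab_group_add \<Rightarrow> 'g) \<Rightarrow> ('g \<Rightarrow> 'g \<Rightarrow> 'g) \<Rightarrow>
   ('f \<Rightarrow> 'v::ab_group_add \<Rightarrow> 'v) \<Rightarrow> ('g \<Rightarrow> 'v \<Rightarrow> 'v) \<Rightarrow> ('v \<Rightarrow> 'g) \<Rightarrow> bool" where
  "lie_leibniz_triple sg br sv act Theta \<longleftrightarrow>
     vector_space sg \<and> vector_space sv \<and>
     \<comment> \<open>Lie algebra\<close>
     (\<forall>x y z. br (x + y) z = br x z + br y z) \<and>
     (\<forall>c x y. br (sg c x) y = sg c (br x y)) \<and>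
     (\<forall>x y z. br x (y + z) = br x y + br x z) \<and>
     (\<forall>c x y. br x (sg c y) = sg c (br x y)) \<and>
     (\<forall>x. br x x = 0) \<and>
     (\<forall>x y z. br x (br y z) + br y (br z x) + br z (br x y) = 0) \<and>
     \<comment> \<open>g-module\<close>
     (\<forall>x y u. act (x + y) u = act x u + act y u) \<and>
     (\<forall>c x u. act (sg c x) u = sv c (act x u)) \<and>
     (\<forall>x u w. act x (u + w) = act x u + act x w) \<and>
     (\<forall>c x u. act x (sv c u) = sv c (act x u)) \<and>
     (\<forall>x y u. act (br x y) u = act x (act y u) - act y (act x u)) \<and>
     \<comment> \<open>Theta linear with the Leibniz-type condition\<close>
     Vector_Spaces.linear sv sg Theta \<and>
     (\<forall>u w. Theta (act (Theta u) w) = br (Theta u) (Theta w))"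

definition hom_act :: "('g \<Rightarrow> 'g \<Rightarrow> 'g::ab_group_add) \<Rightarrow> ('g \<Rightarrow> 'v \<Rightarrow> 'v) \<Rightarrow> 'g \<Rightarrow> ('v \<Rightarrow> 'g) \<Rightarrow> ('v \<Rightarrow> 'g)" where
  "hom_act br act x phi = (\<lambda>u. br x (phi u) - phi (act x u))"

inductive_set R_Theta ::
  "('f::field \<Rightarrow> 'g::ab_group_add \<Rightarrow> 'g) \<Rightarrow> ('g \<Rightarrow> 'g \<Rightarrow> 'g) \<Rightarrow> ('g \<Rightarrow> 'v \<Rightarrow> 'v) \<Rightarrow> ('v \<Rightarrow> 'g) \<Rightarrow> ('v \<Rightarrow> 'g) set"
  for sg br act Theta where
  gen: "Theta \<in> R_Theta sg br act Theta"
| zero: "(\<lambda>u. 0) \<in> R_Theta sg br act Theta"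
| add: "phi \<in> R_Theta sg br act Theta \<Longrightarrow> psi \<in> R_Theta sg br act Theta \<Longrightarrow>
        (\<lambda>u. phi u + psi u) \<in> R_Theta sg br act Theta"
| scale: "phi \<in> R_Theta sg br act Theta \<Longrightarrow> (\<lambda>u. sg c (phi u)) \<in> R_Theta sg br act Theta"
| act: "phi \<in> R_Theta sg br act Theta \<Longrightarrow> hom_act br act x phi \<in> R_Theta sg br act Theta"

section \<open>U_2 = S^2 V (degree-2 part of the free Lie superalgebra on odd V)\<close>

text \<open>Formal linear combinations of symbols [u,v] are finitely supported functions
  z :: 'v => 'v => 'f (z u v = coefficient of the symbol [u,v]).\<close>
definition fscale :: "'f::field \<Rightarrow> ('v \<Rightarrow> 'v \<Rightarrow> 'f) \<Rightarrow> ('v \<Rightarrow> 'v \<Rightarrow> 'f)" where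
  "fscale c z = (\<lambda>a b. c * z a b)"

definition fdelta :: "'v \<Rightarrow> 'v \<Rightarrow> ('v \<Rightarrow> 'v \<Rightarrow> 'f::field)" where
  "fdelta u v = (\<lambda>a b. if a = u \<and> b = v then 1 else 0)"

definition formal_space :: "('v \<Rightarrow> 'v \<Rightarrow> 'f::field) set" where
  "formal_space = module.span fscale (range (\<lambda>(u, v). fdelta u v))"

definition sym_rel :: "('f::field \<Rightarrow> 'v::ab_group_add \<Rightarrow> 'v) \<Rightarrow> ('v \<Rightarrow> 'v \<Rightarrow> 'f) set" where
  "sym_rel sv = module.span fscale
     ({fdelta (u + u') w - fdelta u w - fdelta u' w | u u' w. True} \<union>
      {fdelta (sv c u) w - fscale c (fdelta u w) | c u w. True} \<union>
      {fdelta u w - fdelta w u | u w. True})"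

definition U2_class :: "('f::field \<Rightarrow> 'v::ab_group_add \<Rightarrow> 'v) \<Rightarrow> ('v \<Rightarrow> 'v \<Rightarrow> 'f) \<Rightarrow> ('v \<Rightarrow> 'v \<Rightarrow> 'f) set" where
  "U2_class sv z = {z'. z' \<in> formal_space \<and> z' - z \<in> sym_rel sv}"

definition U2 :: "('f::field \<Rightarrow> 'v::ab_group_add \<Rightarrow> 'v) \<Rightarrow> ('v \<Rightarrow> 'v \<Rightarrow> 'f) set set" where
  "U2 sv = U2_class sv ` formal_space"

definition U2_rep :: "('v \<Rightarrow> 'v \<Rightarrow> 'f) set \<Rightarrow> ('v \<Rightarrow> 'v \<Rightarrow> 'f)" where
  "U2_rep X = (SOME z. z \<in> X)"

definition fsupp :: "('v \<Rightarrow> 'v \<Rightarrow> 'f::zero) \<Rightarrow> ('v \<times> 'v) set" where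
  "fsupp z = {(a, b). z a b \<noteq> 0}"

definition formal_eval :: "('f::field \<Rightarrow> 'w::ab_group_add \<Rightarrow> 'w) \<Rightarrow> ('v \<Rightarrow> 'v \<Rightarrow> 'w) \<Rightarrow> ('v \<Rightarrow> 'v \<Rightarrow> 'f) \<Rightarrow> 'w" where
  "formal_eval sw f z = (\<Sum>p\<in>fsupp z. sw (z (fst p) (snd p)) (f (fst p) (snd p)))"

definition U2_zero :: "('f::field \<Rightarrow> 'v::ab_group_add \<Rightarrow> 'v) \<Rightarrow> ('v \<Rightarrow> 'v \<Rightarrow> 'f) set" where
  "U2_zero sv = U2_class sv 0"

definition U2_add :: "('f::field \<Rightarrow> 'v::ab_group_add \<Rightarrow> 'v) \<Rightarrow> ('v \<Rightarrow> 'v \<Rightarrow> 'f) set \<Rightarrow> ('v \<Rightarrow> 'v \<Rightarrow> 'f) set \<Rightarrow> ('v \<Rightarrow> 'v \<Rightarrow> 'f) set" where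
  "U2_add sv X Y = U2_class sv (U2_rep X + U2_rep Y)"

definition U2_scale :: "('f::field \<Rightarrow> 'v::ab_group_add \<Rightarrow> 'v) \<Rightarrow> 'f \<Rightarrow> ('v \<Rightarrow> 'v \<Rightarrow> 'f) set \<Rightarrow> ('v \<Rightarrow> 'v \<Rightarrow> 'f) set" where
  "U2_scale sv c X = U2_class sv (fscale c (U2_rep X))"

definition U2_act :: "('f::field \<Rightarrow> 'v::ab_group_add \<Rightarrow> 'v) \<Rightarrow> ('g \<Rightarrow> 'v \<Rightarrow> 'v) \<Rightarrow> 'g \<Rightarrow> ('v \<Rightarrow> 'v \<Rightarrow> 'f) set \<Rightarrow> ('v \<Rightarrow> 'v \<Rightarrow> 'f) set" where
  "U2_act sv act x X = U2_class sv
     (formal_eval fscale (\<lambda>a b. fdelta (act x a) b + fdelta a (act x b)) (U2_rep X))"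

definition sigma :: "('f::field \<Rightarrow> 'v::ab_group_add \<Rightarrow> 'v) \<Rightarrow> ('g \<Rightarrow> 'v \<Rightarrow> 'v) \<Rightarrow> ('v \<Rightarrow> 'g) \<Rightarrow> ('v \<Rightarrow> 'v \<Rightarrow> 'f) set \<Rightarrow> 'v" where
  "sigma sv act Theta X =
     formal_eval sv (\<lambda>a b. sv (inverse 2) (act (Theta a) b + act (Theta b) a)) (U2_rep X)"

text \<open>Bracket U_{-1} x U_2 -> U_1 in the Lie superalgebra U:
  [phi,[a,b]] = [[phi,a],b] - [a,[phi,b]] = phi(a).b + phi(b).a.\<close>
definition bracket_m1_2 :: "('f::field \<Rightarrow> 'v::ab_group_add \<Rightarrow> 'v) \<Rightarrow> ('g \<Rightarrow> 'v \<Rightarrow> 'v) \<Rightarrow> ('v \<Rightarrow> 'g) \<Rightarrow> ('v \<Rightarrow> 'v \<Rightarrow> 'f) set \<Rightarrow> 'v" where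
  "bracket_m1_2 sv act phi X =
     formal_eval sv (\<lambda>a b. act (phi a) b + act (phi b) a) (U2_rep X)"

definition U2_submodule :: "('f::field \<Rightarrow> 'v::ab_group_add \<Rightarrow> 'v) \<Rightarrow> ('g \<Rightarrow> 'v \<Rightarrow> 'v) \<Rightarrow> ('v \<Rightarrow> 'v \<Rightarrow> 'f) set set \<Rightarrow> bool" where
  "U2_submodule sv act M \<longleftrightarrow>
     M \<subseteq> U2 sv \<and> U2_zero sv \<in> M \<and>
     (\<forall>X\<in>M. \<forall>Y\<in>M. U2_add sv X Y \<in> M) \<and>
     (\<forall>c. \<forall>X\<in>M. U2_scale sv c X \<in> M) \<and>
     (\<forall>x. \<forall>X\<in>M. U2_act sv act x X \<in> M)"

text \<open>K: the sum of all g-submodules of U_2 contained in ker sigma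
  (set of finite sums of elements of such submodules).\<close>
inductive_set K_set :: "('f::field \<Rightarrow> 'v::ab_group_add \<Rightarrow> 'v) \<Rightarrow> ('g \<Rightarrow> 'v \<Rightarrow> 'v) \<Rightarrow> ('v \<Rightarrow> 'g) \<Rightarrow> ('v \<Rightarrow> 'v \<Rightarrow> 'f) set set"
  for sv act Theta where
  zero: "U2_zero sv \<in> K_set sv act Theta"
| sum: "U2_submodule sv act M \<Longrightarrow> (\<forall>Z\<in>M. sigma sv act Theta Z = 0) \<Longrightarrow> X \<in> M \<Longrightarrow>
        Y \<in> K_set sv act Theta \<Longrightarrow> U2_add sv X Y \<in> K_set sv act Theta"

end

theory Submission
  imports Defs
begin

definition fin :: "('v \<Rightarrow> 'v \<Rightarrow> 'f::zero) \<Rightarrow> bool" where "fin z \<longleftrightarrow> finite (fsupp z)"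

lemma module_fscale: "module (fscale :: 'f::field \<Rightarrow> ('v\<Rightarrow>'v\<Rightarrow>'f) \<Rightarrow> _)"
  by unfold_locales (auto simp: fscale_def fun_eq_iff algebra_simps)

lemma fsupp_add: "fsupp (z + w :: 'v \<Rightarrow> 'v \<Rightarrow> 'f::ab_group_add) \<subseteq> fsupp z \<union> fsupp w"
  by (auto simp: fsupp_def)
lemma fsupp_scale: "fsupp (fscale c z) \<subseteq> fsupp z"
  by (auto simp: fsupp_def fscale_def)
lemma fsupp_zero[simp]: "fsupp 0 = {}"
  by (auto simp: fsupp_def)
lemma fsupp_uminus[simp]: "fsupp (- z :: 'v \<Rightarrow> 'v \<Rightarrow> 'f::ab_group_add) = fsupp z"
  by (auto simp: fsupp_def)
lemma fsupp_delta[simp]: "fsupp (fdelta u v :: 'v \<Rightarrow> 'v \<Rightarrow> 'f::field) = {(u,v)}"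
  by (auto simp: fsupp_def fdelta_def)

lemma fin_add: "fin (z :: 'v \<Rightarrow> 'v \<Rightarrow> 'f::ab_group_add) \<Longrightarrow> fin w \<Longrightarrow> fin (z + w)"
  unfolding fin_def by (meson finite_UnI finite_subset fsupp_add)
lemma fin_scale: "fin (z :: 'v \<Rightarrow> 'v \<Rightarrow> 'f::field) \<Longrightarrow> fin (fscale c z)"
  unfolding fin_def by (meson finite_subset fsupp_scale)
lemma fin_uminus: "fin (z :: 'v \<Rightarrow> 'v \<Rightarrow> 'f::ab_group_add) \<Longrightarrow> fin (- z)"
  unfolding fin_def by simp
lemma fin_diff: "fin (z :: 'v \<Rightarrow> 'v \<Rightarrow> 'f::ab_group_add) \<Longrightarrow> fin w \<Longrightarrow> fin (z - w)"
  using fin_add[of z "-w"] fin_uminus[of w] by simp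
lemma fin_zero[simp]: "fin 0" unfolding fin_def by simp
lemma fin_delta[simp]: "fin (fdelta u v :: 'v \<Rightarrow> 'v \<Rightarrow> 'f::field)" unfolding fin_def by simp

context vector_space
begin

lemma fe_superset:
  assumes "finite S" "fsupp z \<subseteq> S"
  shows "formal_eval scale f z = (\<Sum>p\<in>S. scale (z (fst p) (snd p)) (f (fst p) (snd p)))"
  unfolding formal_eval_def
  by (rule sum.mono_neutral_left[OF assms(1) assms(2)]) (auto simp: fsupp_def)

lemma fe_add:
  assumes "fin z" "fin w"
  shows "formal_eval scale f (z + w) = formal_eval scale f z + formal_eval scale f w"
proof -
  let ?S = "fsupp z \<union> fsupp w"
  have fS: "finite ?S" using assms by (simp add: fin_def)
  have "formal_eval scale f (z + w) = (\<Sum>p\<in>?S. scale ((z+w) (fst p) (snd p)) (f (fst p) (snd p)))"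
    by (rule fe_superset[OF fS fsupp_add])
  also have "\<dots> = (\<Sum>p\<in>?S. scale (z (fst p) (snd p)) (f (fst p) (snd p)))
     + (\<Sum>p\<in>?S. scale (w (fst p) (snd p)) (f (fst p) (snd p)))"
    by (simp add: scale_left_distrib sum.distrib)
  also have "\<dots> = formal_eval scale f z + formal_eval scale f w"
    by (subst (1 2) fe_superset[OF fS]) auto
  finally show ?thesis .
qed

lemma fe_zero[simp]: "formal_eval scale f 0 = 0"
  unfolding formal_eval_def by simp

lemma fe_scale:
  assumes "fin z"
  shows "formal_eval scale f (fscale c z) = scale c (formal_eval scale f z)"
proof -
  have fS: "finite (fsupp z)" using assms by (simp add: fin_def)
  show ?thesis
    by (subst fe_superset[OF fS fsupp_scale]) 
       (simp add: formal_eval_def scale_sum_right fscale_def)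
qed

lemma fe_diff:
  assumes "fin z" "fin w"
  shows "formal_eval scale f (z - w) = formal_eval scale f z - formal_eval scale f w"
  using fe_add[OF fin_diff[OF assms] assms(2), of f] by (simp add: algebra_simps)

lemma fe_delta: "formal_eval scale f (fdelta u v) = f u v"
  unfolding formal_eval_def fsupp_delta by (simp add: fdelta_def)

lemma fe_sum:
  assumes "finite A" "\<And>i. i \<in> A \<Longrightarrow> fin (g i)"
  shows "fin (\<Sum>i\<in>A. g i) \<and> formal_eval scale f (\<Sum>i\<in>A. g i) = (\<Sum>i\<in>A. formal_eval scale f (g i))"
  using assms by (induction A rule: finite_induct) (auto simp: fe_add fin_add)

lemma fe_fdiff:
  "formal_eval scale (\<lambda>a b. f a b - g a b) z = formal_eval scale f z - formal_eval scale g z"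
  unfolding formal_eval_def by (simp add: scale_right_diff_distrib sum_subtractf)

lemma fe_fadd:
  "formal_eval scale (\<lambda>a b. f a b + g a b) z = formal_eval scale f z + formal_eval scale g z"
  unfolding formal_eval_def by (simp add: scale_right_distrib sum.distrib)

lemma fe_fzero:
  "formal_eval scale (\<lambda>a b. 0) z = 0"
  unfolding formal_eval_def by simp

end

lemma fe_hom:
  assumes "vector_space s1" "vector_space s2"
    and hadd: "\<And>x y. h (x + y) = h x + h y" and hs: "\<And>c x. h (s1 c x) = s2 c (h x)"
  shows "formal_eval s2 (\<lambda>a b. h (f a b)) z = h (formal_eval s1 f z)"
proof -
  interpret additive h by unfold_locales (rule hadd)
  show ?thesis unfolding formal_eval_def by (simp add: sum hs)
qed

lemma fe_comp:
  assumes "vector_space sw" "fin z" "\<And>a b. fin (D a b)"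
  shows "formal_eval sw f (formal_eval fscale D z) = formal_eval sw (\<lambda>a b. formal_eval sw f (D a b)) z"
proof -
  interpret vector_space sw by fact
  have "formal_eval fscale D z = (\<Sum>p\<in>fsupp z. fscale (z (fst p) (snd p)) (D (fst p) (snd p)))"
    unfolding formal_eval_def ..
  moreover have "formal_eval sw f (\<Sum>p\<in>fsupp z. fscale (z (fst p) (snd p)) (D (fst p) (snd p)))
     = (\<Sum>p\<in>fsupp z. formal_eval sw f (fscale (z (fst p) (snd p)) (D (fst p) (snd p))))"
    using fe_sum[of "fsupp z" "\<lambda>p. fscale (z (fst p) (snd p)) (D (fst p) (snd p))" f] assms(2,3)
    by (auto simp: fin_def[of z] intro: fin_scale)
  ultimately show ?thesis
    using assms(3) by (simp add: fe_scale formal_eval_def[of sw "\<lambda>a b. formal_eval sw f (D a b)"])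
qed


interpretation FM: module "fscale :: 'f::field \<Rightarrow> ('v\<Rightarrow>'v\<Rightarrow>'f) \<Rightarrow> _"
  by (rule module_fscale)

lemma fs_fin: "z \<in> formal_space \<Longrightarrow> fin z"
  unfolding formal_space_def
  by (induction rule: FM.span_induct)
     (auto simp: FM.subspace_def fin_add fin_scale)

lemma fs_delta: "fdelta u v \<in> formal_space"
  unfolding formal_space_def by (rule FM.span_base) auto
lemma fs_add: "z \<in> formal_space \<Longrightarrow> w \<in> formal_space \<Longrightarrow> z + w \<in> formal_space"
  unfolding formal_space_def by (rule FM.span_add)
lemma fs_scale: "z \<in> formal_space \<Longrightarrow> fscale c z \<in> formal_space"
  unfolding formal_space_def by (rule FM.span_scale)
lemma fs_zero: "0 \<in> formal_space"
  unfolding formal_space_def by (rule FM.span_zero)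
lemma fs_sum: "(\<And>i. i \<in> A \<Longrightarrow> g i \<in> formal_space) \<Longrightarrow> (\<Sum>i\<in>A. g i) \<in> formal_space"
  unfolding formal_space_def by (rule FM.span_sum)

lemma fs_fe:
  assumes "\<And>a b. D a b \<in> formal_space"
  shows "formal_eval fscale D z \<in> formal_space"
  unfolding formal_eval_def using assms by (intro fs_sum fs_scale) auto

lemma sr_add: "z \<in> sym_rel sv \<Longrightarrow> w \<in> sym_rel sv \<Longrightarrow> z + w \<in> sym_rel sv"
  unfolding sym_rel_def by (rule FM.span_add)
lemma sr_diff: "z \<in> sym_rel sv \<Longrightarrow> w \<in> sym_rel sv \<Longrightarrow> z - w \<in> sym_rel sv"
  unfolding sym_rel_def by (rule FM.span_diff)
lemma sr_zero: "0 \<in> sym_rel sv"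
  unfolding sym_rel_def by (rule FM.span_zero)

lemma sym_kill:
  assumes vs: "vector_space sw"
    and Fadd: "\<And>u u' w. F (u + u') w = F u w + F u' w"
    and Fsc: "\<And>c u w. F (sv c u) w = sw c (F u w)"
    and Fsym: "\<And>u w. F u w = F w u"
    and s: "s \<in> sym_rel sv"
  shows "fin s \<and> formal_eval sw F s = 0"
proof -
  interpret W: vector_space sw by (rule vs)
  show ?thesis
    using s unfolding sym_rel_def
  proof (induction rule: FM.span_induct)
    case base
    show ?case by (auto simp: FM.subspace_def fin_add fin_scale W.fe_add W.fe_scale)
  next
    case (step x)
    then consider (a) u u' w where "x = fdelta (u+u') w - fdelta u w - fdelta u' w"
      | (b) c u w where "x = fdelta (sv c u) w - fscale c (fdelta u w)"
      | (c) u w where "x = fdelta u w - fdelta w u" by blast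
    then show ?case
    proof cases
      case a
      have f: "fin (fdelta (u + u') w - fdelta u w)" by (intro fin_diff fin_delta)
      have e: "formal_eval sw F x = F (u+u') w - F u w - F u' w"
        unfolding a W.fe_diff[OF f fin_delta] W.fe_diff[OF fin_delta fin_delta] W.fe_delta ..
      have "fin x" unfolding a by (rule fin_diff[OF f fin_delta])
      then show ?thesis using e by (simp add: Fadd)
    next
      case b
      have e: "formal_eval sw F x = F (sv c u) w - sw c (F u w)"
        unfolding b W.fe_diff[OF fin_delta fin_scale[OF fin_delta]] W.fe_scale[OF fin_delta] W.fe_delta ..
      have "fin x" unfolding b by (rule fin_diff[OF fin_delta fin_scale[OF fin_delta]])
      then show ?thesis using e by (simp add: Fsc)
    next
      case c
      have e: "formal_eval sw F x = F u w - F w u"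
        unfolding c W.fe_diff[OF fin_delta fin_delta] W.fe_delta ..
      have "fin x" unfolding c by (rule fin_diff[OF fin_delta fin_delta])
      then show ?thesis using e by (simp add: Fsym[of u w])
    qed
  qed
qed

lemma cls_mem: "z \<in> formal_space \<Longrightarrow> z \<in> U2_class sv z"
  unfolding U2_class_def by (simp add: sr_zero)

lemma rep_cls: "z \<in> formal_space \<Longrightarrow> U2_rep (U2_class sv z) \<in> formal_space \<and> U2_rep (U2_class sv z) - z \<in> sym_rel sv"
proof -
  assume "z \<in> formal_space"
  then have "U2_rep (U2_class sv z) \<in> U2_class sv z"
    unfolding U2_rep_def by (rule someI[of "\<lambda>z'. z' \<in> U2_class sv z" z, OF cls_mem])
  then show ?thesis unfolding U2_class_def by simp
qed

lemma cls_eq: "z - w \<in> sym_rel sv \<Longrightarrow> U2_class sv z = U2_class sv w"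
proof -
  assume a: "z - w \<in> sym_rel sv"
  have "z' - z \<in> sym_rel sv \<longleftrightarrow> z' - w \<in> sym_rel sv" for z'
  proof
    assume "z' - z \<in> sym_rel sv"
    from sr_add[OF this a] show "z' - w \<in> sym_rel sv" by simp
  next
    assume "z' - w \<in> sym_rel sv"
    from sr_diff[OF this a] show "z' - z \<in> sym_rel sv" by simp
  qed
  then show ?thesis unfolding U2_class_def by auto
qed

lemma U2_rep: "X \<in> U2 sv \<Longrightarrow> U2_rep X \<in> formal_space \<and> X = U2_class sv (U2_rep X)"
proof -
  assume "X \<in> U2 sv"
  then obtain z where z: "z \<in> formal_space" "X = U2_class sv z" unfolding U2_def by auto
  from rep_cls[OF z(1), of sv] z(2) have r: "U2_rep X \<in> formal_space" "U2_rep X - z \<in> sym_rel sv" by auto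
  show ?thesis using r z cls_eq[OF r(2)] by auto
qed

lemma cls_U2: "z \<in> formal_space \<Longrightarrow> U2_class sv z \<in> U2 sv"
  unfolding U2_def by auto

lemma eval_cls:
  assumes vs: "vector_space sw"
    and Fadd: "\<And>u u' w. F (u + u') w = F u w + F u' w"
    and Fsc: "\<And>c u w. F (sv c u) w = sw c (F u w)"
    and Fsym: "\<And>u w. F u w = F w u"
    and z: "z \<in> formal_space"
  shows "formal_eval sw F (U2_rep (U2_class sv z)) = formal_eval sw F z"
proof -
  interpret W: vector_space sw by (rule vs)
  let ?r = "U2_rep (U2_class sv z)"
  from rep_cls[OF z] have r: "?r \<in> formal_space" "?r - z \<in> sym_rel sv" by auto
  from sym_kill[OF vs Fadd Fsc Fsym r(2)] have "formal_eval sw F (?r - z) = 0" by simp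
  then show ?thesis using W.fe_diff[OF fs_fin[OF r(1)] fs_fin[OF z], of F] by simp
qed


locale LLT =
  fixes sg :: "'f::field_char_0 \<Rightarrow> 'g::ab_group_add \<Rightarrow> 'g" and br :: "'g \<Rightarrow> 'g \<Rightarrow> 'g"
    and sv :: "'f \<Rightarrow> 'v::ab_group_add \<Rightarrow> 'v" and act :: "'g \<Rightarrow> 'v \<Rightarrow> 'v" and Theta :: "'v \<Rightarrow> 'g"
  assumes llt: "lie_leibniz_triple sg br sv act Theta"
begin

lemma vsg: "vector_space sg" using llt by (simp add: lie_leibniz_triple_def)
lemma vsv: "vector_space sv" using llt by (simp add: lie_leibniz_triple_def)

sublocale G: vector_space sg by (rule vsg)
sublocale V: vector_space sv by (rule vsv)

lemma br_addr: "br x (y + z) = br x y + br x z" using llt by (simp add: lie_leibniz_triple_def)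
lemma br_scr: "br x (sg c y) = sg c (br x y)" using llt by (simp add: lie_leibniz_triple_def)
lemma act_addl: "act (x + y) u = act x u + act y u" using llt by (simp add: lie_leibniz_triple_def)
lemma act_scl: "act (sg c x) u = sv c (act x u)" using llt by (simp add: lie_leibniz_triple_def)
lemma act_addr: "act x (u + w) = act x u + act x w" using llt by (simp add: lie_leibniz_triple_def)
lemma act_scr: "act x (sv c u) = sv c (act x u)" using llt by (simp add: lie_leibniz_triple_def)
lemma act_br: "act (br x y) u = act x (act y u) - act y (act x u)" using llt by (simp add: lie_leibniz_triple_def)
lemma th_lin: "Vector_Spaces.linear sv sg Theta" using llt by (simp add: lie_leibniz_triple_def)
lemma th_add: "Theta (u + w) = Theta u + Theta w"
  using th_lin unfolding linear_iff_module_hom module_hom_def module_hom_axioms_def by blast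
lemma th_sc: "Theta (sv c u) = sg c (Theta u)"
  using th_lin unfolding linear_iff_module_hom module_hom_def module_hom_axioms_def by blast

lemma act_zero_l[simp]: "act 0 u = 0"
  using act_addl[of 0 0 u] by simp
lemma act_zero_r[simp]: "act x 0 = 0"
  using act_addr[of x 0 0] by simp
lemma act_diff_l: "act (x - y) u = act x u - act y u"
  using act_addl[of "x - y" y u] by (simp add: algebra_simps)
lemma act_diff_r: "act x (u - w) = act x u - act x w"
  using act_addr[of x "u - w" w] by (simp add: algebra_simps)
lemma br_diff_r: "br x (y - z) = br x y - br x z"
  using br_addr[of x "y - z" z] by (simp add: algebra_simps)

definition lin :: "('v \<Rightarrow> 'g) \<Rightarrow> bool" where
  "lin phi \<longleftrightarrow> (\<forall>u w. phi (u + w) = phi u + phi w) \<and> (\<forall>c u. phi (sv c u) = sg c (phi u))"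

lemma R_lin: "chi \<in> R_Theta sg br act Theta \<Longrightarrow> lin chi"
proof (induction rule: R_Theta.induct)
  case gen then show ?case by (simp add: lin_def th_add th_sc)
next
  case zero then show ?case by (simp add: lin_def)
next
  case (add phi psi) then show ?case by (simp add: lin_def algebra_simps G.scale_right_distrib)
next
  case (scale phi c) then show ?case by (simp add: lin_def G.scale_right_distrib G.scale_left_commute)
next
  case (act phi x) then show ?case
    by (simp add: lin_def hom_act_def br_addr act_addr br_scr act_scr G.scale_right_diff_distrib)
qed

definition Fp :: "('v \<Rightarrow> 'g) \<Rightarrow> 'v \<Rightarrow> 'v \<Rightarrow> 'v" where
  "Fp phi a b = act (phi a) b + act (phi b) a"

lemma bracket_Fp: "bracket_m1_2 sv act phi X = formal_eval sv (Fp phi) (U2_rep X)"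
  unfolding bracket_m1_2_def Fp_def[abs_def] ..

lemma evc:
  assumes "lin phi" "z \<in> formal_space"
  shows "formal_eval sv (Fp phi) (U2_rep (U2_class sv z)) = formal_eval sv (Fp phi) z"
  using assms
  by (intro eval_cls[OF vsv]) (auto simp: lin_def Fp_def act_addl act_addr act_scl act_scr V.scale_right_distrib)

lemma b_zero: "lin phi \<Longrightarrow> bracket_m1_2 sv act phi (U2_zero sv) = 0"
  unfolding bracket_Fp U2_zero_def by (simp add: evc fs_zero)

lemma b_add:
  assumes "lin phi" "X \<in> U2 sv" "Y \<in> U2 sv"
  shows "bracket_m1_2 sv act phi (U2_add sv X Y) = bracket_m1_2 sv act phi X + bracket_m1_2 sv act phi Y"
  using U2_rep[OF assms(2)] U2_rep[OF assms(3)] assms(1)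
  unfolding bracket_Fp U2_add_def by (simp add: evc fs_add V.fe_add fs_fin)

lemma b_scale:
  assumes "lin phi" "X \<in> U2 sv"
  shows "bracket_m1_2 sv act phi (U2_scale sv c X) = sv c (bracket_m1_2 sv act phi X)"
  using U2_rep[OF assms(2)] assms(1)
  unfolding bracket_Fp U2_scale_def by (simp add: evc fs_scale V.fe_scale fs_fin)

lemma D_fs: "fdelta (act x a) b + fdelta a (act x b) \<in> formal_space"
  by (intro fs_add fs_delta)

lemma b_act:
  assumes "lin phi" "X \<in> U2 sv"
  shows "bracket_m1_2 sv act phi (U2_act sv act x X) =
     formal_eval sv (\<lambda>a b. Fp phi (act x a) b + Fp phi a (act x b)) (U2_rep X)"
proof -
  have r: "U2_rep X \<in> formal_space" using U2_rep[OF assms(2)] by simp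
  have "bracket_m1_2 sv act phi (U2_act sv act x X) =
     formal_eval sv (Fp phi) (formal_eval fscale (\<lambda>a b. fdelta (act x a) b + fdelta a (act x b)) (U2_rep X))"
    unfolding bracket_Fp U2_act_def by (rule evc[OF assms(1) fs_fe[OF D_fs]])
  also have "\<dots> = formal_eval sv (\<lambda>a b. formal_eval sv (Fp phi) (fdelta (act x a) b + fdelta a (act x b))) (U2_rep X)"
    by (rule fe_comp[OF vsv fs_fin[OF r] fs_fin[OF D_fs]])
  also have "\<dots> = formal_eval sv (\<lambda>a b. Fp phi (act x a) b + Fp phi a (act x b)) (U2_rep X)"
    by (simp add: V.fe_add V.fe_delta)
  finally show ?thesis .
qed

lemma act_fe: "formal_eval sv (\<lambda>a b. act x (f a b)) z = act x (formal_eval sv f z)"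
  by (rule fe_hom[OF vsv vsv]) (simp_all add: act_addr act_scr)

lemma b_hom:
  assumes "lin phi" "X \<in> U2 sv"
  shows "bracket_m1_2 sv act (hom_act br act x phi) X =
     act x (bracket_m1_2 sv act phi X) - bracket_m1_2 sv act phi (U2_act sv act x X)"
proof -
  have pw: "Fp (hom_act br act x phi) = (\<lambda>a b. act x (Fp phi a b) - (Fp phi (act x a) b + Fp phi a (act x b)))"
    by (simp add: fun_eq_iff Fp_def hom_act_def act_diff_l act_br act_addr algebra_simps)
  show ?thesis
    unfolding b_act[OF assms] unfolding bracket_Fp pw V.fe_fdiff act_fe ..
qed

lemma U2_add_U2: "X \<in> U2 sv \<Longrightarrow> Y \<in> U2 sv \<Longrightarrow> U2_add sv X Y \<in> U2 sv"
  unfolding U2_add_def by (intro cls_U2 fs_add) (simp_all add: U2_rep)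
lemma U2_scale_U2: "X \<in> U2 sv \<Longrightarrow> U2_scale sv c X \<in> U2 sv"
  unfolding U2_scale_def by (intro cls_U2 fs_scale) (simp_all add: U2_rep)
lemma U2_act_U2: "U2_act sv act x X \<in> U2 sv"
  unfolding U2_act_def by (intro cls_U2 fs_fe D_fs)
lemma U2_zero_U2: "U2_zero sv \<in> U2 sv"
  unfolding U2_zero_def by (intro cls_U2 fs_zero)

lemma sigma_eq: "sigma sv act Theta X = sv (inverse 2) (bracket_m1_2 sv act Theta X)"
  unfolding sigma_def bracket_m1_2_def
  by (rule fe_hom[OF vsv vsv]) (simp_all add: V.scale_right_distrib V.scale_left_commute)

lemma sigma0: "sigma sv act Theta X = 0 \<longleftrightarrow> bracket_m1_2 sv act Theta X = 0"
  unfolding sigma_eq by simp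

abbreviation RT where "RT \<equiv> R_Theta sg br act Theta"

lemma M_kill:
  assumes M: "U2_submodule sv act M" and s: "\<forall>Z\<in>M. sigma sv act Theta Z = 0"
    and chi: "chi \<in> RT"
  shows "\<forall>X\<in>M. bracket_m1_2 sv act chi X = 0"
  using chi
proof (induction rule: R_Theta.induct)
  case gen then show ?case using s sigma0 by blast
next
  case zero then show ?case by (simp add: bracket_m1_2_def V.fe_fzero)
next
  case (add phi psi)
  have "(\<lambda>a b. act (phi a + psi a) b + act (phi b + psi b) a) =
    (\<lambda>a b. (act (phi a) b + act (phi b) a) + (act (psi a) b + act (psi b) a))"
    by (simp add: fun_eq_iff act_addl algebra_simps)
  then show ?case using add.IH by (simp add: bracket_m1_2_def V.fe_fadd)
next
  case (scale phi c)
  have "(\<lambda>a b. act (sg c (phi a)) b + act (sg c (phi b)) a) =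
    (\<lambda>a b. sv c (act (phi a) b + act (phi b) a))"
    by (simp add: fun_eq_iff act_scl V.scale_right_distrib)
  moreover have "formal_eval sv (\<lambda>a b. sv c (act (phi a) b + act (phi b) a)) z =
     sv c (formal_eval sv (\<lambda>a b. act (phi a) b + act (phi b) a) z)" for z
    by (rule fe_hom[OF vsv vsv]) (simp_all add: V.scale_right_distrib V.scale_left_commute)
  ultimately show ?case using scale.IH by (simp add: bracket_m1_2_def)
next
  case (act phi x)
  have sub: "M \<subseteq> U2 sv" "\<forall>X\<in>M. U2_act sv act x X \<in> M" using M by (auto simp: U2_submodule_def)
  show ?case
  proof
    fix X assume X: "X \<in> M"
    show "bracket_m1_2 sv act (hom_act br act x phi) X = 0"
      using b_hom[OF R_lin[OF act.hyps] sub(1)[THEN subsetD, OF X]] act.IH X sub(2) by simp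
  qed
qed

definition N where "N = {X \<in> U2 sv. \<forall>chi \<in> RT. bracket_m1_2 sv act chi X = 0}"

lemma N_add: "X \<in> N \<Longrightarrow> Y \<in> N \<Longrightarrow> U2_add sv X Y \<in> N"
  unfolding N_def by (auto simp: b_add R_lin U2_add_U2)

lemma N_sub: "U2_submodule sv act N"
  unfolding U2_submodule_def
proof (intro conjI ballI allI)
  show "N \<subseteq> U2 sv" unfolding N_def by auto
  show "U2_zero sv \<in> N" unfolding N_def by (auto simp: b_zero R_lin U2_zero_U2)
  show "U2_add sv X Y \<in> N" if "X \<in> N" "Y \<in> N" for X Y using that by (rule N_add)
  show "U2_scale sv c X \<in> N" if "X \<in> N" for c X
    using that unfolding N_def by (auto simp: b_scale R_lin U2_scale_U2)
  show "U2_act sv act x X \<in> N" if X: "X \<in> N" for x X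
  proof -
    have "bracket_m1_2 sv act chi (U2_act sv act x X) = 0" if chi: "chi \<in> RT" for chi
    proof -
      have "hom_act br act x chi \<in> RT" using chi by (rule R_Theta.act)
      then show ?thesis using b_hom[OF R_lin[OF chi], of X x] X chi unfolding N_def by auto
    qed
    then show ?thesis unfolding N_def by (auto simp: U2_act_U2)
  qed
qed

lemma N_sigma: "\<forall>Z\<in>N. sigma sv act Theta Z = 0"
  unfolding N_def using sigma0 R_Theta.gen by blast

lemma add_zero_id: "X \<in> U2 sv \<Longrightarrow> U2_add sv X (U2_zero sv) = X"
proof -
  assume X: "X \<in> U2 sv"
  from rep_cls[OF fs_zero, of sv] have s: "U2_rep (U2_zero sv) \<in> sym_rel sv"
    unfolding U2_zero_def by simp
  have "U2_class sv (U2_rep X + U2_rep (U2_zero sv)) = U2_class sv (U2_rep X)"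
    by (rule cls_eq) (simp add: s)
  then show ?thesis unfolding U2_add_def using U2_rep[OF X] by simp
qed

lemma K_eq: "K_set sv act Theta = N"
proof
  show "K_set sv act Theta \<subseteq> N"
  proof
    fix X assume "X \<in> K_set sv act Theta"
    then show "X \<in> N"
    proof (induction rule: K_set.induct)
      case zero then show ?case using N_sub by (simp add: U2_submodule_def)
    next
      case (sum M X Y)
      have "X \<in> N" unfolding N_def using sum.hyps M_kill[OF sum.hyps(1,2)]
        by (auto simp: U2_submodule_def)
      then show ?case using N_add sum.IH by blast
    qed
  qed
  show "N \<subseteq> K_set sv act Theta"
  proof
    fix X assume X: "X \<in> N"
    have "U2_add sv X (U2_zero sv) \<in> K_set sv act Theta"
      by (rule K_set.sum[OF N_sub N_sigma X K_set.zero])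
    then show "X \<in> K_set sv act Theta" using X add_zero_id unfolding N_def by auto
  qed
qed

lemma final:
  "K_set sv act Theta = {X \<in> U2 sv. \<forall>chi \<in> R_Theta sg br act Theta. bracket_m1_2 sv act chi X = 0} \<and>
   (\<forall>chi \<in> R_Theta sg br act Theta. \<forall>X \<in> K_set sv act Theta. bracket_m1_2 sv act chi X = 0)"
  using K_eq unfolding N_def by auto

end

theorem proposition4p7:
  shows "(\<forall>(sg :: real \<Rightarrow> 'g::ab_group_add \<Rightarrow> 'g) br (sv :: real \<Rightarrow> 'v::ab_group_add \<Rightarrow> 'v) act Theta.
            lie_leibniz_triple sg br sv act Theta \<longrightarrow>
              K_set sv act Theta =
                {X \<in> U2 sv. \<forall>chi \<in> R_Theta sg br act Theta. bracket_m1_2 sv act chi X = 0} \<and>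
              (\<forall>chi \<in> R_Theta sg br act Theta. \<forall>X \<in> K_set sv act Theta. bracket_m1_2 sv act chi X = 0))
       \<and>
       (\<forall>(sg :: complex \<Rightarrow> 'h::ab_group_add \<Rightarrow> 'h) br (sv :: complex \<Rightarrow> 'w::ab_group_add \<Rightarrow> 'w) act Theta.
            lie_leibniz_triple sg br sv act Theta \<longrightarrow>
              K_set sv act Theta =
                {X \<in> U2 sv. \<forall>chi \<in> R_Theta sg br act Theta. bracket_m1_2 sv act chi X = 0} \<and>
              (\<forall>chi \<in> R_Theta sg br act Theta. \<forall>X \<in> K_set sv act Theta. bracket_m1_2 sv act chi X = 0))"
proof (intro conjI allI impI)
  fix sg :: "real \<Rightarrow> 'g::ab_group_add \<Rightarrow> 'g" and br and sv :: "real \<Rightarrow> 'v::ab_group_add \<Rightarrow> 'v" and act Theta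
  assume "lie_leibniz_triple sg br sv act Theta"
  then interpret L: LLT sg br sv act Theta by (rule LLT.intro)
  show "K_set sv act Theta =
                {X \<in> U2 sv. \<forall>chi \<in> R_Theta sg br act Theta. bracket_m1_2 sv act chi X = 0}"
    "\<forall>chi \<in> R_Theta sg br act Theta. \<forall>X \<in> K_set sv act Theta. bracket_m1_2 sv act chi X = 0"
    using L.final by auto
next
  fix sg :: "complex \<Rightarrow> 'h::ab_group_add \<Rightarrow> 'h" and br and sv :: "complex \<Rightarrow> 'w::ab_group_add \<Rightarrow> 'w" and act Theta
  assume "lie_leibniz_triple sg br sv act Theta"
  then interpret L: LLT sg br sv act Theta by (rule LLT.intro)
  show "K_set sv act Theta =
                {X \<in> U2 sv. \<forall>chi \<in> R_Theta sg br act Theta. bracket_m1_2 sv act chi X = 0}"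
    "\<forall>chi \<in> R_Theta sg br act Theta. \<forall>X \<in> K_set sv act Theta. bracket_m1_2 sv act chi X = 0"
    using L.final by auto
qed

end
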